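(* Let $n\ge1$ and let $M$ be the set of maps $\mu:\{2,\dots,n+1\}\to\{1,\dots,n\}$ with $\mu(2)=1$ and $\mu(j)<j$ for all $j$. For each $\mu\in M$ there is a finite sequence of acceptable moves which transforms $\mu$ into an element of $M$ in upper echelon form.
   Context: An acceptable move on $\mu\in M$: if for some $j\in\{2,\dots,n\}$ one has $\mu(j+1)<\mu(j)$, replace $\mu$ by $(j,j+1)\circ\mu\circ(j,j+1)$, where $(j,j+1)$ is the transposition of $j$ and $j+1$. (Graphically, $\mu$ marks the entry $B_{\mu(m),m}$ in column $m$ of an upper triangular $n\times n$ array with rows $1,\dots,n$ and columns $2,\dots,n+1$; a move swaps the marked entries of columns $j$ and $j+1$ and simultaneously of rows $j$ and $j+1$.) $\mu$ is in upper echelon form if every marked entry in a higher row lies to the left of every marked entry in a lower row, i.e. $\mu(m)<\mu(m')$ implies $m<m'$ (equivalently, $\mu$ is nondecreasing). *)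

theory Defs
  imports "HOL-Combinatorics.Transposition"
begin

text \<open>Maps mu : {2..n+1} -> {1..n} are represented as functions nat => nat that are
  0 outside the domain {2..n+1} (extensional convention).\<close>

definition M :: "nat \<Rightarrow> (nat \<Rightarrow> nat) set" where
  "M n = {\<mu>. (\<forall>m. m \<notin> {2..n+1} \<longrightarrow> \<mu> m = 0)
              \<and> (\<forall>m\<in>{2..n+1}. \<mu> m \<in> {1..n})
              \<and> \<mu> 2 = 1
              \<and> (\<forall>j\<in>{2..n+1}. \<mu> j < j)}"

definition acceptable_move :: "nat \<Rightarrow> (nat \<Rightarrow> nat) \<Rightarrow> (nat \<Rightarrow> nat) \<Rightarrow> bool" where
  "acceptable_move n \<mu> \<mu>' \<longleftrightarrow> \<mu> \<in> M n \<and>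
     (\<exists>j\<in>{2..n}. \<mu> (j+1) < \<mu> j \<and>
        \<mu>' = transpose j (j+1) \<circ> \<mu> \<circ> transpose j (j+1))"

definition upper_echelon :: "nat \<Rightarrow> (nat \<Rightarrow> nat) \<Rightarrow> bool" where
  "upper_echelon n \<mu> \<longleftrightarrow> (\<forall>m\<in>{2..n+1}. \<forall>m'\<in>{2..n+1}. \<mu> m < \<mu> m' \<longrightarrow> m < m')"

end

theory Submission
  imports Defs
begin

lemma move_M:
  assumes "\<mu> \<in> M n" "j \<in> {2..n}" "\<mu> (j+1) < \<mu> j"
  shows "transpose j (j+1) \<circ> \<mu> \<circ> transpose j (j+1) \<in> M n"
proof -
  have A: "\<forall>m. m \<notin> {2..n+1} \<longrightarrow> \<mu> m = 0" "\<forall>m\<in>{2..n+1}. \<mu> m \<in> {1..n}"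
     "\<mu> 2 = 1" "\<forall>j\<in>{2..n+1}. \<mu> j < j" using assms(1) unfolding M_def by auto
  have j3: "j \<ge> 3"
  proof (rule ccontr)
    assume "\<not> j \<ge> 3"
    hence "j = 2" using assms(2) by auto
    moreover have "(3::nat) \<in> {2..n+1}" using assms(2) by auto
    ultimately have "\<mu> 3 \<in> {1..n}" "\<mu> 3 < 1" using A assms(2,3) by (auto simp del: atLeastAtMost_iff)
    thus False by auto
  qed
  show ?thesis unfolding M_def
  proof (intro CollectI conjI ballI allI impI)
    fix m assume "m \<notin> {2..n+1}" thus "(transpose j (j+1) \<circ> \<mu> \<circ> transpose j (j+1)) m = 0"
      using A assms(2) by (auto simp: transpose_def)
  next
    fix m assume m: "m \<in> {2..n+1}"
    have "\<mu> j < j" "\<mu> (j+1) < j+1" "\<mu> m < m" "\<mu> m \<in> {1..n}" "\<mu> j \<in> {1..n}" "\<mu> (j+1) \<in> {1..n}"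
      using A m assms(2) by auto
    thus "(transpose j (j+1) \<circ> \<mu> \<circ> transpose j (j+1)) m \<in> {1..n}"
      "(transpose j (j+1) \<circ> \<mu> \<circ> transpose j (j+1)) m < m"
      using m assms(2,3) by (auto simp: transpose_def)
  next
    show "(transpose j (j+1) \<circ> \<mu> \<circ> transpose j (j+1)) 2 = 1"
      using j3 A by (auto simp: transpose_def)
  qed
qed

lemma move_lex:
  assumes "\<mu> \<in> M n" "j \<in> {2..n}" "\<mu> (j+1) < \<mu> j"
  defines "\<nu> \<equiv> transpose j (j+1) \<circ> \<mu> \<circ> transpose j (j+1)"
  shows "(map \<nu> [2..<n+2], map \<mu> [2..<n+2]) \<in> lex {(a,b). a < b}"
proof -
  have A: "\<forall>j\<in>{2..n+1}. \<mu> j < j" using assms(1) unfolding M_def by auto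
  have sp: "[2..<n+2] = [2..<j] @ j # [j+1..<n+2]"
  proof -
    have "[2..<n+2] = [2..<j] @ [j..<j+(n+2-j)]"
      using upt_add_eq_append[of 2 j "n+2-j"] assms(2) by simp
    also have "[j..<j+(n+2-j)] = j # [j+1..<n+2]" using assms(2) by (simp add: upt_conv_Cons)
    finally show ?thesis .
  qed
  have eq: "map \<nu> [2..<j] = map \<mu> [2..<j]"
  proof (rule map_cong[OF refl])
    fix m assume "m \<in> set [2..<j]"
    hence m: "2 \<le> m" "m < j" by auto
    hence "\<mu> m < m" using A assms(2) by auto
    thus "\<nu> m = \<mu> m" using m unfolding \<nu>_def by (auto simp: transpose_def)
  qed
  have "\<nu> j = \<mu> (j+1)"
  proof -
    have "\<mu> j < j" using A assms(2) by auto
    thus ?thesis using assms(3) unfolding \<nu>_def by (auto simp: transpose_def)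
  qed
  hence "\<nu> j < \<mu> j" using assms(3) by simp
  thus ?thesis unfolding sp lex_conv
    apply (simp only: map_append list.map length_append length_map list.size mem_Collect_eq split_conv)
    apply (rule conjI, simp)
    apply (rule exI[of _ "map \<mu> [2..<j]"], rule exI[of _ "\<nu> j"], rule exI[of _ "\<mu> j"])
    using eq by auto
qed

lemma mono_step:
  fixes \<mu> :: "nat \<Rightarrow> nat" and m k n :: nat
  assumes "\<forall>j\<in>{2..n}. \<mu> j \<le> \<mu> (j+1)"
  shows "2 \<le> m \<Longrightarrow> m + k \<le> n+1 \<Longrightarrow> \<mu> m \<le> \<mu> (m+k)"
proof (induction k)
  case 0 thus ?case by simp
next
  case (Suc k)
  hence "\<mu> m \<le> \<mu> (m+k)" by simp
  also have "\<mu> (m+k) \<le> \<mu> (m+k+1)" using assms Suc.prems by auto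
  finally show ?case by simp
qed

lemma not_ue:
  assumes "\<not> upper_echelon n \<mu>"
  shows "\<exists>j\<in>{2..n}. \<mu> (j+1) < \<mu> j"
proof (rule ccontr)
  assume "\<not> ?thesis"
  hence h: "\<forall>j\<in>{2..n}. \<mu> j \<le> \<mu> (j+1)" by (auto simp: not_less)
  from assms obtain m m' where "m \<in> {2..n+1}" "m' \<in> {2..n+1}" "\<mu> m < \<mu> m'" "\<not> m < m'"
    unfolding upper_echelon_def by auto
  moreover have "\<mu> m' \<le> \<mu> (m' + (m - m'))"
    using mono_step[OF h, of m' "m - m'"] calculation by auto
  ultimately show False by auto
qed

theorem lemma3p2:
  fixes n :: nat and \<mu> :: "nat \<Rightarrow> nat"
  assumes "n \<ge> 1" and "\<mu> \<in> M n"
  shows "\<exists>\<nu>. (acceptable_move n)\<^sup>*\<^sup>* \<mu> \<nu> \<and> \<nu> \<in> M n \<and> upper_echelon n \<nu>"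
proof -
  have wf: "wf (inv_image (lex {(a,b). a < b}) (\<lambda>\<mu>::nat\<Rightarrow>nat. map \<mu> [2..<n+2]))"
    by (intro wf_inv_image wf_lex) (simp add: wf_less)
  have "\<mu> \<in> M n \<longrightarrow> (\<exists>\<nu>. (acceptable_move n)\<^sup>*\<^sup>* \<mu> \<nu> \<and> \<nu> \<in> M n \<and> upper_echelon n \<nu>)"
  proof (induction \<mu> rule: wf_induct[OF wf])
    case (1 \<mu>)
    show ?case
    proof
      assume mM: "\<mu> \<in> M n"
      show "\<exists>\<nu>. (acceptable_move n)\<^sup>*\<^sup>* \<mu> \<nu> \<and> \<nu> \<in> M n \<and> upper_echelon n \<nu>"
      proof (cases "upper_echelon n \<mu>")
        case True thus ?thesis using mM by blast
      next
        case False
        then obtain j where j: "j\<in>{2..n}" "\<mu> (j+1) < \<mu> j" using not_ue by blast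
        define \<mu>' where "\<mu>' = transpose j (j+1) \<circ> \<mu> \<circ> transpose j (j+1)"
        have mv: "acceptable_move n \<mu> \<mu>'" unfolding acceptable_move_def \<mu>'_def using mM j by blast
        have M': "\<mu>' \<in> M n" unfolding \<mu>'_def using move_M[OF mM j] .
        have "(\<mu>', \<mu>) \<in> inv_image (lex {(a,b). a < b}) (\<lambda>\<mu>::nat\<Rightarrow>nat. map \<mu> [2..<n+2])"
          using move_lex[OF mM j] unfolding \<mu>'_def by simp
        with 1 M' obtain \<nu> where "(acceptable_move n)\<^sup>*\<^sup>* \<mu>' \<nu>" "\<nu> \<in> M n" "upper_echelon n \<nu>" by blast
        thus ?thesis using mv by (meson converse_rtranclp_into_rtranclp)
      qed
    qed
  qed
  thus ?thesis using assms by blast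
qed

end
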